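(* Let $\boldsymbol\pi\in\Delta^{d-1}$ and $1\le k\le d-1$. Then $$\min_{\mathbf X\in\mathcal D_k}H(\mathbf X\boldsymbol\pi)=H(\boldsymbol\pi^{(k)}).$$
   Context: $H(\mathbf x)=-\sum_r x_r\log x_r$ (with $0\log0=0$). $\mathcal D_k$ is the set of matrices $\mathbf X\in\{0,1\}^{k\times d}$ in which every column has exactly one nonzero entry and every row has at least one nonzero entry. With $\pi_{[1]}\ge\pi_{[2]}\ge\dots\ge\pi_{[d]}$ the entries of $\boldsymbol\pi$ in decreasing order, $\boldsymbol\pi^{(k)}\in\Delta^{k-1}$ is defined by $\pi^{(k)}_1=\sum_{r=1}^{d-k+1}\pi_{[r]}$ and $\pi^{(k)}_l=\pi_{[d-k+l]}$ for $2\le l\le k$ (if $k\ge2$). *)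

theory Defs
  imports Main Complex_Main
begin

text \<open>Vectors of length n are functions nat => real, only indices < n matter (0-based).\<close>

definition in_simplex :: "nat \<Rightarrow> (nat \<Rightarrow> real) \<Rightarrow> bool" where
  "in_simplex d p \<longleftrightarrow> (\<forall>i<d. 0 \<le> p i) \<and> (\<Sum>i<d. p i) = 1"

definition entropy :: "nat \<Rightarrow> (nat \<Rightarrow> real) \<Rightarrow> real" where
  "entropy n x = - (\<Sum>r<n. (if x r = 0 then 0 else x r * ln (x r)))"

text \<open>k x d matrices as functions nat => nat => real, zero outside the index range.\<close>
definition D_set :: "nat \<Rightarrow> nat \<Rightarrow> (nat \<Rightarrow> nat \<Rightarrow> real) set" where
  "D_set k d = {X. (\<forall>r c. X r c = 0 \<or> X r c = 1)
                 \<and> (\<forall>r c. (k \<le> r \<or> d \<le> c) \<longrightarrow> X r c = 0)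
                 \<and> (\<forall>c<d. card {r. r < k \<and> X r c = 1} = 1)
                 \<and> (\<forall>r<k. \<exists>c<d. X r c = 1)}"

definition mat_vec :: "nat \<Rightarrow> (nat \<Rightarrow> nat \<Rightarrow> real) \<Rightarrow> (nat \<Rightarrow> real) \<Rightarrow> (nat \<Rightarrow> real)" where
  "mat_vec d X p = (\<lambda>r. \<Sum>c<d. X r c * p c)"

text \<open>Entries of p in decreasing order: sorted_desc d p ! r is pi_[r+1].\<close>
definition sorted_desc :: "nat \<Rightarrow> (nat \<Rightarrow> real) \<Rightarrow> real list" where
  "sorted_desc d p = rev (sort (map p [0..<d]))"

text \<open>pi^(k), 0-based: entry 0 is the sum of the d-k+1 largest entries,
  entry l (1 <= l < k) is pi_[d-k+l+1].\<close>
definition pi_k :: "nat \<Rightarrow> nat \<Rightarrow> (nat \<Rightarrow> real) \<Rightarrow> (nat \<Rightarrow> real)" where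
  "pi_k d k p = (\<lambda>l. if l = 0 then (\<Sum>r<d-k+1. sorted_desc d p ! r)
                     else if l < k then sorted_desc d p ! (d - k + l) else 0)"

end

theory Submission
  imports Defs "HOL-Combinatorics.List_Permutation"
begin

definition phi :: "real \<Rightarrow> real" where "phi x = (if x = 0 then 0 else x * ln x)"

lemma phi_superadd:
  assumes "0 \<le> a" "0 \<le> b" shows "phi a + phi b \<le> phi (a + b)"
proof (cases "a = 0 \<or> b = 0")
  case True then show ?thesis by (auto simp: phi_def)
next
  case False
  hence a: "a > 0" and b: "b > 0" using assms by auto
  have "a * ln a \<le> a * ln (a+b)" using a b by (intro mult_left_mono) auto
  moreover have "b * ln b \<le> b * ln (a+b)" using a b by (intro mult_left_mono) auto
  ultimately have "a * ln a + b * ln b \<le> (a+b) * ln (a+b)" by (simp add: distrib_right)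
  then show ?thesis using a b by (simp add: phi_def)
qed

lemma D_mono:
  assumes "0 \<le> u" "u \<le> v" "0 \<le> x"
  shows "phi (u + x) - phi u \<le> phi (v + x) - phi v"
proof (cases "u = 0")
  case True
  then show ?thesis using phi_superadd[of v x] assms by (simp add: phi_def)
next
  case False
  hence u: "u > 0" using assms by auto
  let ?G = "\<lambda>t. (t + x) * ln (t + x) - t * ln t"
  have "?G u \<le> ?G v"
  proof (rule DERIV_nonneg_imp_nondecreasing[OF assms(2)])
    fix t assume t: "u \<le> t" "t \<le> v"
    hence tp: "t > 0" using u by auto
    have tx: "t + x > 0" using tp assms(3) by simp
    have "DERIV ?G t :> ln (t+x) - ln t"
      using tp tx by (auto intro!: derivative_eq_intros simp: divide_simps)
    moreover have "ln (t+x) - ln t \<ge> 0"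
      using tp assms(3) by simp
    ultimately show "\<exists>y. DERIV ?G t :> y \<and> y \<ge> 0" by blast
  qed
  then show ?thesis using u assms by (simp add: phi_def)
qed

lemma transfer_sum:
  assumes "finite J" "0 \<le> a" "\<forall>j\<in>J. 0 \<le> c j \<and> c j \<le> b j \<and> c j \<le> a"
  shows "phi a + (\<Sum>j\<in>J. phi (b j)) \<le> phi (a + (\<Sum>j\<in>J. b j - c j)) + (\<Sum>j\<in>J. phi (c j))"
  using assms(1,3)
proof (induction J rule: finite_induct)
  case empty then show ?case by simp
next
  case (insert j F)
  let ?A = "a + (\<Sum>j\<in>F. b j - c j)"
  have A: "?A \<ge> a" using insert by (intro add_increasing2 sum_nonneg) auto
  have IH: "phi a + (\<Sum>j\<in>F. phi (b j)) \<le> phi ?A + (\<Sum>j\<in>F. phi (c j))" using insert by auto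
  have cj: "0 \<le> c j" "c j \<le> b j" "c j \<le> a" using insert by auto
  have "phi (c j + (b j - c j)) - phi (c j) \<le> phi (?A + (b j - c j)) - phi ?A"
    using cj A by (intro D_mono) auto
  hence "phi ?A + phi (b j) \<le> phi (?A + (b j - c j)) + phi (c j)" by simp
  then show ?case using insert IH by (simp add: algebra_simps)
qed

lemma swap_opt:
  fixes p :: "nat \<Rightarrow> real"
  assumes nonneg: "\<forall>i<d. 0 \<le> p i" and S: "S \<subseteq> {..<d}"
    and small: "\<forall>i\<in>S. \<forall>j\<in>{..<d}-S. p i \<le> p j"
  shows "R \<subseteq> {..<d} \<Longrightarrow> card R = card S \<Longrightarrow>
    phi ((\<Sum>i<d. p i) - sum p R) + (\<Sum>i\<in>R. phi (p i)) \<le> phi ((\<Sum>i<d. p i) - sum p S) + (\<Sum>i\<in>S. phi (p i))"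
proof (induction "card (R - S)" arbitrary: R)
  case 0
  have fR: "finite R" using 0 finite_subset by blast
  have fS: "finite S" using S finite_subset by blast
  have "R \<subseteq> S" using 0 fR by auto
  hence "R = S" using 0 fS by (metis card_subset_eq)
  then show ?case by simp
next
  case (Suc n)
  have fR: "finite R" using Suc finite_subset by blast
  have fS: "finite S" using S finite_subset by blast
  obtain i where i: "i \<in> R" "i \<notin> S" using Suc(2) by (metis card.empty Diff_eq_empty_iff nat.distinct(1) subsetI)
  have "card (R - S) = card (S - R)"
    using Suc(4) fR fS by (metis card_Diff_subset_Int Int_commute finite_Int)
  then obtain j where j: "j \<in> S" "j \<notin> R" using Suc(2) by (metis card.empty Diff_eq_empty_iff nat.distinct(1) subsetI)
  define R' where "R' = insert j (R - {i})"
  have R'S: "R' - S = (R - S) - {i}" using j unfolding R'_def by auto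
  have cR': "card (R' - S) = n" using R'S Suc(2) i fR
    by (metis Diff_iff card_Diff_singleton diff_Suc_1 finite_Diff)
  have R'sub: "R' \<subseteq> {..<d}" using Suc(3) j S unfolding R'_def by auto
  have "card R > 0" using fR i card_gt_0_iff by blast
  hence cardR': "card R' = card S" using Suc(4) fR i j unfolding R'_def
    by (simp add: card_Suc_Diff1)
  have IH: "phi ((\<Sum>i<d. p i) - sum p R') + (\<Sum>i\<in>R'. phi (p i)) \<le> phi ((\<Sum>i<d. p i) - sum p S) + (\<Sum>i\<in>S. phi (p i))"
    using Suc(1)[OF cR'[symmetric] R'sub cardR'] .
  have sR': "sum p R' = sum p R - p i + p j" unfolding R'_def using fR i j
    by (simp add: sum_diff1)
  have pR': "(\<Sum>i\<in>R'. phi (p i)) = (\<Sum>i\<in>R. phi (p i)) - phi (p i) + phi (p j)" unfolding R'_def using fR i j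
    by (simp add: sum_diff1)
  define B where "B = (\<Sum>i<d. p i) - sum p R"
  have B: "B = sum p ({..<d} - R)" unfolding B_def using Suc(3) by (simp add: sum_diff)
  have jd: "j < d" using j S by auto
  have id: "i < d" using i Suc(3) by auto
  have pjB: "p j \<le> B" unfolding B using jd j nonneg
    by (intro member_le_sum) auto
  have pji: "p j \<le> p i" using small j i id by auto
  have "phi (p j + (p i - p j)) - phi (p j) \<le> phi (B + (p i - p j)) - phi B"
    using pjB pji nonneg jd by (intro D_mono) auto
  moreover have "(\<Sum>i<d. p i) - sum p R' = B + (p i - p j)" using sR' unfolding B_def by simp
  ultimately have "phi B + phi (p i) \<le> phi ((\<Sum>i<d. p i) - sum p R') + phi (p j)"
    by simp
  then show ?case using IH pR' unfolding B_def by linarith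
qed

lemma entropy_phi: "entropy n x = - (\<Sum>r<n. phi (x r))"
  unfolding entropy_def phi_def by simp

lemma sigma_exists:
  obtains \<sigma> where "bij_betw \<sigma> {..<d} {..<d}" "\<forall>i<d. sorted_desc d p ! i = p (\<sigma> i)"
proof -
  have "sorted_desc d p <~~> map p [0..<d]" unfolding sorted_desc_def by simp
  from permutation_Ex_bij[OF this] obtain f where
    "bij_betw f {..<length (sorted_desc d p)} {..<length (map p [0..<d])}"
    "\<forall>i<length (sorted_desc d p). sorted_desc d p ! i = map p [0..<d] ! f i" by blast
  moreover have "length (sorted_desc d p) = d" unfolding sorted_desc_def by simp
  ultimately have "bij_betw f {..<d} {..<d}" "\<forall>i<d. sorted_desc d p ! i = p (f i)"
    by (auto simp: bij_betw_def, metis atLeastLessThan_iff diff_zero imageI lessThan_iff nth_map nth_upt plus_nat.add_0 zero_le length_upt)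
  then show ?thesis using that by blast
qed

lemma sorted_desc_mono:
  assumes "i \<le> j" "j < d"
  shows "sorted_desc d p ! j \<le> sorted_desc d p ! i"
proof -
  let ?L = "sort (map p [0..<d])"
  have len: "length ?L = d" by simp
  have "rev ?L ! j = ?L ! (d - Suc j)" "rev ?L ! i = ?L ! (d - Suc i)"
    using assms len by (auto simp: rev_nth)
  moreover have "?L ! (d - Suc j) \<le> ?L ! (d - Suc i)"
    using assms len by (intro sorted_nth_mono) auto
  ultimately show ?thesis unfolding sorted_desc_def by simp
qed

lemma D_set_finite: "finite (D_set k d)"
proof -
  let ?F = "\<lambda>A r c. if (r, c) \<in> A then 1 else (0::real)"
  have "D_set k d \<subseteq> ?F ` Pow ({..<k} \<times> {..<d})"
  proof
    fix X assume X: "X \<in> D_set k d"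
    let ?A = "{(r, c). r < k \<and> c < d \<and> X r c = 1}"
    have "X = ?F ?A"
    proof (intro ext)
      fix r c
      have h1: "X r c = 0 \<or> X r c = 1" and h2: "(k \<le> r \<or> d \<le> c) \<longrightarrow> X r c = 0"
        using X unfolding D_set_def by auto
      show "X r c = ?F ?A r c" using h1 h2 by (cases "X r c = 1") auto
    qed
    then show "X \<in> ?F ` Pow ({..<k} \<times> {..<d})" by blast
  qed
  then show ?thesis by (rule finite_subset) auto
qed

theorem mainTheorem4:
  fixes d k :: nat and p :: "nat \<Rightarrow> real"
  assumes "in_simplex d p" and "1 \<le> k" and "k \<le> d - 1"
  shows "Min ((\<lambda>X. entropy k (mat_vec d X p)) ` D_set k d) = entropy k (pi_k d k p)"
proof -
  have nonneg: "\<forall>i<d. 0 \<le> p i" and tot: "(\<Sum>i<d. p i) = 1"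
    using assms(1) unfolding in_simplex_def by auto
  have kd: "k < d" "1 \<le> k" using assms by auto
  define s where "s = sorted_desc d p"
  obtain \<sigma> where bij: "bij_betw \<sigma> {..<d} {..<d}" and s\<sigma>: "\<forall>i<d. s ! i = p (\<sigma> i)"
    using sigma_exists unfolding s_def by blast
  have smono: "\<And>i j. i \<le> j \<Longrightarrow> j < d \<Longrightarrow> s ! j \<le> s ! i"
    unfolding s_def by (rule sorted_desc_mono)
  have inj: "inj_on \<sigma> {..<d}" and img: "\<sigma> ` {..<d} = {..<d}" using bij by (auto simp: bij_betw_def)
  define S where "S = \<sigma> ` {d-k+1..<d}"
  have Ssub: "S \<subseteq> {..<d}" unfolding S_def using img by auto
  have "card S = card {d-k+1..<d}" unfolding S_def
    by (subst card_image) (auto intro: inj_on_subset[OF inj])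
  hence cardS: "card S = k - 1" using kd by simp
  have small: "\<forall>i\<in>S. \<forall>j\<in>{..<d}-S. p i \<le> p j"
  proof (intro ballI)
    fix i j assume i: "i \<in> S" and j: "j \<in> {..<d} - S"
    obtain i' where i': "i' \<in> {d-k+1..<d}" "i = \<sigma> i'" using i S_def by auto
    have "j \<in> \<sigma> ` {..<d}" using j img by auto
    then obtain j' where j': "j' < d" "j = \<sigma> j'" by auto
    have "j' \<notin> {d-k+1..<d}" using j j' S_def by auto
    hence "j' \<le> i'" using j' i' by auto
    then show "p i \<le> p j" using smono[of j' i'] i' j' s\<sigma> by auto
  qed
  have maxp: "\<forall>c<d. p c \<le> p (\<sigma> 0)"
  proof (intro allI impI)
    fix c assume "c < d"
    hence "c \<in> \<sigma> ` {..<d}" using img by auto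
    then obtain j where "j < d" "c = \<sigma> j" by auto
    then show "p c \<le> p (\<sigma> 0)" using smono[of 0 j] s\<sigma> by auto
  qed
  have \<sigma>0: "\<sigma> 0 < d" using img kd by auto
  have split: "(\<Sum>i<d. p (\<sigma> i)) = (\<Sum>i<d-k+1. p (\<sigma> i)) + (\<Sum>i\<in>{d-k+1..<d}. p (\<sigma> i))"
    using kd sum.atLeastLessThan_concat[of 0 "d-k+1" d "\<lambda>i. p (\<sigma> i)"]
    by (simp only: lessThan_atLeast0)
  have reidx: "(\<Sum>i<d. p (\<sigma> i)) = (\<Sum>i<d. p i)" using sum.reindex_bij_betw[OF bij] .
  have sumS: "sum p S = (\<Sum>i\<in>{d-k+1..<d}. p (\<sigma> i))" unfolding S_def
    by (subst sum.reindex) (auto intro: inj_on_subset[OF inj])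
  have pk0: "pi_k d k p 0 = 1 - sum p S"
  proof -
    have "pi_k d k p 0 = (\<Sum>r<d-k+1. s ! r)" unfolding pi_k_def s_def[symmetric] by simp
    also have "\<dots> = (\<Sum>r<d-k+1. p (\<sigma> r))" using s\<sigma> kd by (intro sum.cong) auto
    finally show ?thesis using split reidx tot sumS by simp
  qed
  have pkrest: "(\<Sum>r\<in>{1..<k}. phi (pi_k d k p r)) = (\<Sum>i\<in>S. phi (p i))"
  proof -
    have "(\<Sum>r\<in>{1..<k}. phi (pi_k d k p r)) = (\<Sum>r\<in>{1..<k}. phi (s ! (r + (d - k))))"
      unfolding pi_k_def s_def[symmetric] by (intro sum.cong) (auto simp: add.commute)
    also have "\<dots> = (\<Sum>i\<in>{1 + (d-k)..<k + (d-k)}. phi (s ! i))"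
      by (rule sum.shift_bounds_nat_ivl[symmetric])
    also have "\<dots> = (\<Sum>i\<in>{d-k+1..<d}. phi (p (\<sigma> i)))"
      using kd s\<sigma> by (intro sum.cong) auto
    also have "\<dots> = (\<Sum>i\<in>S. phi (p i))" unfolding S_def
      by (subst sum.reindex) (auto intro: inj_on_subset[OF inj])
    finally show ?thesis .
  qed
  have target: "entropy k (pi_k d k p) = - (phi (1 - sum p S) + (\<Sum>i\<in>S. phi (p i)))"
  proof -
    have "(\<Sum>r<k. phi (pi_k d k p r)) = phi (pi_k d k p 0) + (\<Sum>r\<in>{1..<k}. phi (pi_k d k p r))"
      using kd by (simp add: lessThan_atLeast0 sum.atLeast_Suc_lessThan)
    then show ?thesis unfolding entropy_phi using pk0 pkrest by simp
  qed
  have lower: "entropy k (pi_k d k p) \<le> entropy k (mat_vec d X p)" if X: "X \<in> D_set k d" for X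
  proof -
    define q where "q = mat_vec d X p"
    have X01: "\<And>r c. X r c = 0 \<or> X r c = 1" and Xcol: "\<And>c. c < d \<Longrightarrow> card {r. r < k \<and> X r c = 1} = 1"
      and Xrow: "\<forall>r<k. \<exists>c<d. X r c = 1" using X unfolding D_set_def by auto
    have Xnn: "0 \<le> X r c" for r c using X01[of r c] by auto
    have "\<forall>r\<in>{..<k}. \<exists>c. c < d \<and> X r c = 1" using Xrow by auto
    from bchoice[OF this] obtain m where m0: "\<forall>r\<in>{..<k}. m r < d \<and> X r (m r) = 1" by blast
    have m: "\<forall>r<k. m r < d \<and> X r (m r) = 1" using m0 by auto
    have uniq: "\<And>c r r'. c < d \<Longrightarrow> r < k \<Longrightarrow> r' < k \<Longrightarrow> X r c = 1 \<Longrightarrow> X r' c = 1 \<Longrightarrow> r = r'"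
    proof -
      fix c r r' assume h: "c < d" "r < k" "r' < k" "X r c = 1" "X r' c = 1"
      obtain z where z: "{r. r < k \<and> X r c = 1} = {z}" using Xcol[OF \<open>c < d\<close>] card_1_singletonE by blast
      have "r \<in> {r. r < k \<and> X r c = 1}" "r' \<in> {r. r < k \<and> X r c = 1}" using h by auto
      then show "r = r'" unfolding z by simp
    qed
    have colsum: "(\<Sum>r<k. X r c) = 1" if "c < d" for c
    proof -
      have "(\<Sum>r<k. X r c) = (\<Sum>r<k. if X r c = 1 then 1 else 0)"
        by (intro sum.cong) (use X01 in auto)
      also have "\<dots> = card {r\<in>{..<k}. X r c = 1}"
        using sum.inter_filter[of "{..<k}" "\<lambda>_. (1::real)" "\<lambda>r. X r c = 1"] by simp
      also have "{r\<in>{..<k}. X r c = 1} = {r. r < k \<and> X r c = 1}" by auto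
      finally show ?thesis using Xcol[OF that] by simp
    qed
    have qsum: "(\<Sum>r<k. q r) = 1"
    proof -
      have "(\<Sum>r<k. q r) = (\<Sum>r<k. \<Sum>c<d. X r c * p c)" unfolding q_def mat_vec_def by simp
      also have "\<dots> = (\<Sum>c<d. \<Sum>r<k. X r c * p c)" by (rule sum.swap)
      also have "\<dots> = (\<Sum>c<d. (\<Sum>r<k. X r c) * p c)" by (simp add: sum_distrib_right)
      also have "\<dots> = (\<Sum>c<d. p c)" by (intro sum.cong) (auto simp: colsum)
      finally show ?thesis using tot by simp
    qed
    have qge: "p (m r) \<le> q r" if "r < k" for r
    proof -
      have "X r (m r) * p (m r) \<le> (\<Sum>c<d. X r c * p c)"
        by (rule member_le_sum) (use m that nonneg Xnn in auto)
      then show ?thesis using m that unfolding q_def mat_vec_def by simp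
    qed
    obtain r0 where r0: "r0 < k" "X r0 (\<sigma> 0) = 1"
    proof -
      obtain z where "{r. r < k \<and> X r (\<sigma> 0) = 1} = {z}" using Xcol[OF \<sigma>0] card_1_singletonE by blast
      hence "z \<in> {r. r < k \<and> X r (\<sigma> 0) = 1}" by simp
      then show ?thesis using that by auto
    qed
    have qr0: "p (\<sigma> 0) \<le> q r0"
    proof -
      have "X r0 (\<sigma> 0) * p (\<sigma> 0) \<le> (\<Sum>c<d. X r0 c * p c)"
        by (rule member_le_sum) (use \<sigma>0 nonneg Xnn in auto)
      then show ?thesis using r0 unfolding q_def mat_vec_def by simp
    qed
    define J where "J = {..<k} - {r0}"
    have finJ: "finite J" unfolding J_def by simp
    have step1: "phi (q r0) + (\<Sum>r\<in>J. phi (q r)) \<le> phi (q r0 + (\<Sum>r\<in>J. q r - p (m r))) + (\<Sum>r\<in>J. phi (p (m r)))"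
    proof (rule transfer_sum[OF finJ])
      show "0 \<le> q r0" using qr0 nonneg \<sigma>0 by force
      show "\<forall>j\<in>J. 0 \<le> p (m j) \<and> p (m j) \<le> q j \<and> p (m j) \<le> q r0"
      proof
        fix j assume "j \<in> J"
        hence j: "j < k" unfolding J_def by auto
        have a: "0 \<le> p (m j)" using m j nonneg by auto
        have b: "p (m j) \<le> q j" using qge j by auto
        have "p (m j) \<le> p (\<sigma> 0)" using maxp m j by auto
        then show "0 \<le> p (m j) \<and> p (m j) \<le> q j \<and> p (m j) \<le> q r0" using a b qr0 by linarith
      qed
    qed
    have lhs: "(\<Sum>r<k. phi (q r)) = phi (q r0) + (\<Sum>r\<in>J. phi (q r))"
      unfolding J_def using r0 by (simp add: sum.remove)
    have qs: "(\<Sum>r<k. q r) = q r0 + (\<Sum>r\<in>J. q r)"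
      unfolding J_def using r0 by (simp add: sum.remove)
    have injm: "inj_on m J"
    proof (rule inj_onI)
      fix x y assume "x \<in> J" "y \<in> J" "m x = m y"
      then show "x = y" using m uniq[of "m x" x y] unfolding J_def by auto
    qed
    define R where "R = m ` J"
    have sumR: "sum p R = (\<Sum>r\<in>J. p (m r))" unfolding R_def using injm by (simp add: sum.reindex)
    have phiR: "(\<Sum>i\<in>R. phi (p i)) = (\<Sum>r\<in>J. phi (p (m r)))" unfolding R_def using injm by (simp add: sum.reindex)
    have cardR: "card R = card S" unfolding R_def using injm cardS r0 unfolding J_def
      by (simp add: card_image)
    have Rsub: "R \<subseteq> {..<d}" unfolding R_def J_def using m by auto
    have arg: "q r0 + (\<Sum>r\<in>J. q r - p (m r)) = (\<Sum>i<d. p i) - sum p R"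
      using qsum qs tot sumR by (simp add: sum_subtractf)
    have step2: "phi ((\<Sum>i<d. p i) - sum p R) + (\<Sum>i\<in>R. phi (p i)) \<le> phi ((\<Sum>i<d. p i) - sum p S) + (\<Sum>i\<in>S. phi (p i))"
      by (rule swap_opt[OF nonneg Ssub small Rsub cardR])
    have "(\<Sum>r<k. phi (q r)) \<le> phi (1 - sum p S) + (\<Sum>i\<in>S. phi (p i))"
      using step1 step2 lhs arg phiR tot by simp
    moreover have "entropy k (mat_vec d X p) = - (\<Sum>r<k. phi (q r))" unfolding q_def entropy_phi ..
    ultimately show ?thesis using target by linarith
  qed
  have attain: "entropy k (pi_k d k p) \<in> (\<lambda>X. entropy k (mat_vec d X p)) ` D_set k d"
  proof -
    define \<tau> where "\<tau> = the_inv_into {..<d} \<sigma>"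
    have \<tau>bij: "bij_betw \<tau> {..<d} {..<d}" unfolding \<tau>_def by (rule bij_betw_the_inv_into[OF bij])
    have \<tau>\<sigma>: "\<tau> (\<sigma> i) = i" if "i < d" for i unfolding \<tau>_def using inj that by (simp add: the_inv_into_f_f)
    have \<tau>lt: "\<tau> c < d" if "c < d" for c using \<tau>bij that by (auto simp: bij_betw_def)
    define g where "g c = (if \<tau> c \<le> d - k then 0 else \<tau> c - (d - k))" for c
    have glt: "g c < k" if "c < d" for c using \<tau>lt[OF that] kd unfolding g_def by auto
    define X0 where "X0 r c = (if r < k \<and> c < d \<and> g c = r then 1 else (0::real))" for r c
    have X0D: "X0 \<in> D_set k d"
      unfolding D_set_def
    proof (intro CollectI conjI allI impI)
      fix r c show "X0 r c = 0 \<or> X0 r c = 1" unfolding X0_def by auto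
    next
      fix r c assume "k \<le> r \<or> d \<le> c" then show "X0 r c = 0" unfolding X0_def by auto
    next
      fix c assume c: "c < d"
      have "{r. r < k \<and> X0 r c = 1} = {g c}" using glt[OF c] c unfolding X0_def by auto
      then show "card {r. r < k \<and> X0 r c = 1} = 1" by simp
    next
      fix r assume r: "r < k"
      show "\<exists>c<d. X0 r c = 1"
      proof (cases "r = 0")
        case True
        have "g (\<sigma> 0) = 0" unfolding g_def using \<tau>\<sigma>[of 0] kd by auto
        then show ?thesis using True \<sigma>0 r unfolding X0_def by auto
      next
        case False
        have dl: "d - k + r < d" using r kd by auto
        have "g (\<sigma> (d - k + r)) = r" unfolding g_def using \<tau>\<sigma>[OF dl] False by auto
        moreover have "\<sigma> (d - k + r) < d" using dl img by auto
        ultimately show ?thesis using r unfolding X0_def by auto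
      qed
    qed
    have mv: "mat_vec d X0 p r = pi_k d k p r" if r: "r < k" for r
    proof -
      have "mat_vec d X0 p r = (\<Sum>c<d. if g c = r then p c else 0)"
        unfolding mat_vec_def X0_def using r by (intro sum.cong) auto
      also have "\<dots> = (\<Sum>i<d. if g (\<sigma> i) = r then p (\<sigma> i) else 0)"
        by (rule sum.reindex_bij_betw[OF bij, symmetric])
      also have "\<dots> = (\<Sum>i<d. if (if i \<le> d - k then 0 else i - (d - k)) = r then s ! i else 0)"
        using \<tau>\<sigma> s\<sigma> unfolding g_def by (intro sum.cong) auto
      also have "\<dots> = pi_k d k p r"
      proof (cases "r = 0")
        case True
        have "(\<Sum>i<d. if (if i \<le> d - k then 0 else i - (d - k)) = r then s ! i else 0)
            = (\<Sum>i<d. if i \<le> d - k then s ! i else 0)"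
          using True by (intro sum.cong) auto
        also have "\<dots> = sum ((!) s) {i\<in>{..<d}. i \<le> d - k}"
          using sum.inter_filter[of "{..<d}" "(!) s" "\<lambda>i. i \<le> d - k"] by simp
        also have "{i\<in>{..<d}. i \<le> d - k} = {..<d-k+1}" using kd by auto
        finally show ?thesis using True unfolding pi_k_def s_def by simp
      next
        case False
        have "(\<Sum>i<d. if (if i \<le> d - k then 0 else i - (d - k)) = r then s ! i else 0)
            = (\<Sum>i<d. if d - k + r = i then s ! i else 0)"
          using False by (intro sum.cong) auto
        also have "\<dots> = s ! (d - k + r)"
        proof -
          have "d - k + r \<in> {..<d}" using r kd by auto
          then show ?thesis using sum.delta'[of "{..<d}" "d - k + r" "\<lambda>i. s ! i"] by simp
        qed
        finally show ?thesis using False r unfolding pi_k_def s_def by simp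
      qed
      finally show ?thesis .
    qed
    have "entropy k (mat_vec d X0 p) = entropy k (pi_k d k p)"
      unfolding entropy_phi using mv by simp
    then show ?thesis using X0D by (metis image_eqI)
  qed
  show ?thesis
    by (rule Min_eqI) (use D_set_finite lower attain in auto)
qed

end
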